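(* Let $r\ge1$, $\mu\in\mathcal P_r$, $n\in\mathbb N$ and $\mathbf p\in\Pi_n$, with $P_i=\sum_{j=1}^ip_j$ ($P_0=0$). Then there exists $\mathbf x\in\Xi_n$ minimizing $\mathbf y\mapsto d_r(\delta^{\mathbf p}_{\mathbf y},\mu)$ over $\Xi_n$. Moreover: (a) For $r=1$: $\mathbf x\in\Xi_n$ is such a minimizer if and only if, for every $i=1,\dots,n$, $P_{i-1}<P_i$ implies $x_i\in Q^{F_\mu}_{(P_{i-1}+P_i)/2}$. (b) For $r>1$: $\mathbf x\in\Xi_n$ is such a minimizer if and only if, for every $i=1,\dots,n$, $P_{i-1}<P_i$ implies $x_i=\tau_r^{f_i}$, where $f_i$ is the restriction of $F_\mu^{-1}$ to $[P_{i-1},P_i]$.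
   Context: $\mathcal P$ denotes the set of Borel probability measures on $\mathbb R$; $\mathcal P_r=\{\mu\in\mathcal P:\int|x|^r{\rm d}\mu(x)<\infty\}$. For $\mu\in\mathcal P$, $F_\mu(x)=\mu(]-\infty,x])$ and $F_\mu^{-1}(t)=\sup\{x: F_\mu(x)\le t\}$, $t\in]0,1[$. $d_r(\mu,\nu)=\big(\int_0^1|F_\mu^{-1}(t)-F_\nu^{-1}(t)|^r{\rm d}t\big)^{1/r}$. $\Xi_n=\{\mathbf x\in\mathbb R^n:x_1\le\dots\le x_n\}$, $\Pi_n=\{\mathbf p\in\mathbb R^n:p_i\ge0,\sum_ip_i=1\}$, $\delta^{\mathbf p}_{\mathbf x}=\sum_ip_i\delta_{x_i}$. For $s\in]0,1[$, $Q^{F_\mu}_s=[\inf\{x\in\mathbb R:F_\mu(x)\ge s\},\ \sup\{x\in\mathbb R:F_\mu(x)\le s\}]$ (the set of $s$-quantiles of $\mu$). For a bounded non-degenerate interval $J$ and $f\in L^r(J)$ with $r>1$, $\tau_r^f$ denotes the unique real number minimizing $t\mapsto\|f-t\|_{L^r(J)}$. *)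

theory Defs
  imports "HOL-Probability.Probability"
begin

definition prob_measures :: "real measure set" where
  "prob_measures = {M. prob_space M \<and> sets M = sets borel}"

definition prob_measures_r :: "real \<Rightarrow> real measure set" where
  "prob_measures_r r = {M \<in> prob_measures. integrable M (\<lambda>x. \<bar>x\<bar> powr r)}"

definition cdf :: "real measure \<Rightarrow> real \<Rightarrow> real" where
  "cdf M x = measure M {..x}"

text \<open>Quantile function \<open>F_\<mu>^{-1}(t) = sup {x. F_\<mu>(x) \<le> t}\<close> (relevant for t in ]0,1[).\<close>
definition quantile :: "real measure \<Rightarrow> real \<Rightarrow> real" where
  "quantile M t = Sup {x. cdf M x \<le> t}"

definition d_r :: "real \<Rightarrow> real measure \<Rightarrow> real measure \<Rightarrow> real" where
  "d_r r M N = (LINT t:{0<..<1}|lborel. \<bar>quantile M t - quantile N t\<bar> powr r) powr (1 / r)"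

text \<open>\<open>\<Xi>_n\<close> and \<open>\<Pi>_n\<close>, with vectors indexed by 1..n (values outside 1..n are irrelevant).\<close>
definition Xi_n :: "nat \<Rightarrow> (nat \<Rightarrow> real) set" where
  "Xi_n n = {x. \<forall>i. 1 \<le> i \<and> i < n \<longrightarrow> x i \<le> x (Suc i)}"

definition Pi_n :: "nat \<Rightarrow> (nat \<Rightarrow> real) set" where
  "Pi_n n = {p. (\<forall>i\<in>{1..n}. p i \<ge> 0) \<and> (\<Sum>i=1..n. p i) = 1}"

definition delta_px :: "nat \<Rightarrow> (nat \<Rightarrow> real) \<Rightarrow> (nat \<Rightarrow> real) \<Rightarrow> real measure" where
  "delta_px n p x = measure_of UNIV (sets borel)
     (\<lambda>A. \<Sum>i=1..n. ennreal (p i) * indicator A (x i))"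

definition Psum :: "(nat \<Rightarrow> real) \<Rightarrow> nat \<Rightarrow> real" where
  "Psum p i = (\<Sum>j=1..i. p j)"

definition Q_set :: "real measure \<Rightarrow> real \<Rightarrow> real set" where
  "Q_set M s = {Inf {x. cdf M x \<ge> s} .. Sup {x. cdf M x \<le> s}}"

definition Lr_dist_const :: "real \<Rightarrow> (real \<Rightarrow> real) \<Rightarrow> real set \<Rightarrow> real \<Rightarrow> real" where
  "Lr_dist_const r f J c = (LINT t:J|lborel. \<bar>f t - c\<bar> powr r) powr (1 / r)"

definition tau_r :: "real \<Rightarrow> (real \<Rightarrow> real) \<Rightarrow> real set \<Rightarrow> real" where
  "tau_r r f J = (THE c. \<forall>c'. Lr_dist_const r f J c \<le> Lr_dist_const r f J c')"

definition is_minimizer :: "real \<Rightarrow> real measure \<Rightarrow> nat \<Rightarrow> (nat \<Rightarrow> real) \<Rightarrow> (nat \<Rightarrow> real) \<Rightarrow> bool" where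
  "is_minimizer r M n p x \<longleftrightarrow> x \<in> Xi_n n \<and>
     (\<forall>y\<in>Xi_n n. d_r r (delta_px n p x) M \<le> d_r r (delta_px n p y) M)"

end

theory Submission
  imports Defs
begin


lemma cdf_eq: "Defs.cdf M = Distribution_Functions.cdf M"
  by (auto simp: Defs.cdf_def Distribution_Functions.cdf_def)

lemma prob_measures_rd: "M \<in> prob_measures \<Longrightarrow> real_distribution M"
  unfolding prob_measures_def real_distribution_def real_distribution_axioms_def by auto

context real_distribution
begin

lemma q_ne: assumes "0 < t" shows "{x. Defs.cdf M x \<le> t} \<noteq> {}"
proof -
  have "eventually (\<lambda>x. Distribution_Functions.cdf M x < t) at_bot"
    using order_tendstoD(2)[OF cdf_lim_at_bot assms] .
  then obtain x where "Distribution_Functions.cdf M x < t"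
    by (metis eventually_happens' trivial_limit_at_bot_linorder)
  then show ?thesis by (auto simp: cdf_eq intro!: exI[of _ x])
qed

lemma q_bdd: assumes "t < 1" shows "bdd_above {x. Defs.cdf M x \<le> t}"
proof -
  have "eventually (\<lambda>x. Distribution_Functions.cdf M x > t) at_top"
    using order_tendstoD(1)[OF cdf_lim_at_top_prob assms] .
  then obtain y where y: "Distribution_Functions.cdf M y > t"
    by (metis eventually_happens' trivial_limit_at_top_linorder)
  show ?thesis
  proof (rule bdd_aboveI[of _ y])
    fix x assume "x \<in> {x. Defs.cdf M x \<le> t}"
    then have "Distribution_Functions.cdf M x \<le> t" by (simp add: cdf_eq)
    then show "x \<le> y" using y cdf_nondecreasing[of y x] by linarith
  qed
qed

lemma q_R1: assumes "0 < t" "t < 1" "t < Defs.cdf M c" shows "quantile M t \<le> c"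
  unfolding quantile_def
proof (rule cSup_least[OF q_ne[OF assms(1)]])
  fix x assume "x \<in> {x. Defs.cdf M x \<le> t}"
  then have "Distribution_Functions.cdf M x \<le> t" by (simp add: cdf_eq)
  show "x \<le> c"
  proof (rule ccontr)
    assume "\<not> x \<le> c"
    then have "Distribution_Functions.cdf M c \<le> Distribution_Functions.cdf M x"
      by (intro cdf_nondecreasing) simp
    moreover have "t < Distribution_Functions.cdf M c" using assms(3) unfolding cdf_eq .
    ultimately show False using \<open>Distribution_Functions.cdf M x \<le> t\<close> by linarith
  qed
qed

lemma q_R2: assumes "0 < t" "t < 1" "quantile M t \<le> c" shows "t \<le> Defs.cdf M c"
proof (rule ccontr)
  assume "\<not> t \<le> Defs.cdf M c"
  then have lt: "Distribution_Functions.cdf M c < t" by (simp add: cdf_eq)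
  have "eventually (\<lambda>x. Distribution_Functions.cdf M x < t) (at_right c)"
    using cdf_is_right_cont[of c] lt unfolding continuous_within
    by (simp add: order_tendstoD(2))
  then obtain b where b: "b > c" "\<And>y. c < y \<Longrightarrow> y < b \<Longrightarrow> Distribution_Functions.cdf M y < t"
    unfolding eventually_at_right_field by blast
  define x where "x = (c + b) / 2"
  have x: "c < x" "Distribution_Functions.cdf M x < t"
    using b unfolding x_def by auto
  have "x \<le> quantile M t" unfolding quantile_def
  proof (rule cSup_upper)
    show "x \<in> {x. Defs.cdf M x \<le> t}" using x(2) by (simp add: cdf_eq)
    show "bdd_above {x. Defs.cdf M x \<le> t}" by (rule q_bdd[OF assms(2)])
  qed
  then show False using x assms(3) by simp
qed

lemma q_R3: assumes "0 < t" "t < 1" "\<And>x. x < c \<Longrightarrow> Defs.cdf M x \<le> t" shows "c \<le> quantile M t"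
  unfolding quantile_def
proof (rule dense_le)
  fix y assume "y < c"
  show "y \<le> Sup {x. Defs.cdf M x \<le> t}"
  proof (rule cSup_upper)
    show "y \<in> {x. Defs.cdf M x \<le> t}" using assms(3)[OF \<open>y < c\<close>] by simp
    show "bdd_above {x. Defs.cdf M x \<le> t}" by (rule q_bdd[OF assms(2)])
  qed
qed

lemma q_mono: assumes "0 < s" "s \<le> t" "t < 1" shows "quantile M s \<le> quantile M t"
  unfolding quantile_def
proof (rule cSup_subset_mono[OF q_ne q_bdd])
  show "0 < s" "t < 1" by (rule assms(1), rule assms(3))
  show "{x. Defs.cdf M x \<le> s} \<subseteq> {x. Defs.cdf M x \<le> t}" using assms(2) by auto
qed

lemma q_mono_on: "mono_on {0<..<1} (quantile M)"
proof (rule mono_onI)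
  fix s t :: real assume "s \<in> {0<..<1}" "t \<in> {0<..<1}" "s \<le> t"
  then show "quantile M s \<le> quantile M t" by (intro q_mono) auto
qed

lemma q_meas: "quantile M \<in> borel_measurable (restrict_space borel {0<..<1})"
  by (rule borel_measurable_mono_on_fnc[OF q_mono_on])


lemma q_meas_lborel: "quantile M \<in> borel_measurable (restrict_space lborel {0<..<1})"
proof -
  have "sets (restrict_space lborel {0<..<1::real}) = sets (restrict_space borel {0<..<1})"
    by (simp add: sets_restrict_space)
  then show ?thesis using q_meas measurable_cong_sets by blast
qed

lemma q_set_meas: "set_borel_measurable lborel {0<..<1} (quantile M)"
  unfolding set_borel_measurable_def
  using q_meas_lborel by (subst (asm) borel_measurable_restrict_space_iff) auto

lemma distr_Q: "distr (restrict_space lborel {0<..<1::real}) borel (quantile M) = M"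
proof (intro cdf_unique ext)
  let ?\<Omega> = "restrict_space lborel {0<..<1}::real measure"
  interpret \<Omega>: prob_space ?\<Omega>
    by (auto simp add: emeasure_restrict_space space_restrict_space intro!: prob_spaceI)
  have meas: "quantile M \<in> ?\<Omega> \<rightarrow>\<^sub>M borel" using q_meas_lborel by simp
  show "real_distribution (distr ?\<Omega> borel (quantile M))"
    using meas by simp
  fix x
  let ?A = "quantile M -` {..x} \<inter> {0<..<1}"
  have Asets: "?A \<in> sets lborel"
  proof -
    have "quantile M -` {..x} \<inter> space ?\<Omega> \<in> sets ?\<Omega>"
      by (rule measurable_sets[OF meas]) simp
    then show ?thesis
      by (subst (asm) sets_restrict_space_iff) (auto simp: space_restrict_space)
  qed
  have "Distribution_Functions.cdf (distr ?\<Omega> borel (quantile M)) x = measure lborel ?A"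
    unfolding Distribution_Functions.cdf_def
    using meas by (simp add: measure_distr space_restrict_space measure_restrict_space)
  also have "\<dots> = measure lborel {0 <..< Distribution_Functions.cdf M x}"
    unfolding measure_def
  proof (intro arg_cong[where f=enn2real] emeasure_eq_AE)
    show "AE t in lborel. (t \<in> ?A) = (t \<in> {0<..<Distribution_Functions.cdf M x})"
      using AE_lborel_singleton[of "Distribution_Functions.cdf M x"]
    proof eventually_elim
      case (elim t)
      show ?case
      proof
        assume "t \<in> ?A"
        then have "0 < t" "t < 1" "quantile M t \<le> x" by auto
        then have "t \<le> Defs.cdf M x" by (rule q_R2)
        then show "t \<in> {0<..<Distribution_Functions.cdf M x}" using elim \<open>0 < t\<close> by (auto simp: cdf_eq)
      next
        assume t: "t \<in> {0<..<Distribution_Functions.cdf M x}"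
        then have "t < 1" using cdf_bounded_prob[of x] by auto
        moreover have "quantile M t \<le> x" using t \<open>t < 1\<close> by (intro q_R1) (auto simp: cdf_eq)
        ultimately show "t \<in> ?A" using t by auto
      qed
    qed
  qed (use Asets in auto)
  also have "\<dots> = Distribution_Functions.cdf M x"
    by (simp add: cdf_nonneg)
  finally show "Distribution_Functions.cdf (distr ?\<Omega> borel (quantile M)) x = Distribution_Functions.cdf M x" .
qed standard

lemma Q_integrable:
  assumes "integrable M (\<lambda>x. \<bar>x\<bar> powr r)"
  shows "set_integrable lborel {0<..<1} (\<lambda>t. \<bar>quantile M t\<bar> powr r)"
proof -
  have meas: "quantile M \<in> restrict_space lborel {0<..<1} \<rightarrow>\<^sub>M borel" using q_meas_lborel by simp
  have "integrable (distr (restrict_space lborel {0<..<1::real}) borel (quantile M)) (\<lambda>x. \<bar>x\<bar> powr r)"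
    using assms distr_Q by simp
  then have "integrable (restrict_space lborel {0<..<1::real}) (\<lambda>t. \<bar>quantile M t\<bar> powr r)"
    by (subst (asm) integrable_distr_eq[OF meas]) auto
  then show ?thesis
    by (subst set_integrable_eq) auto
qed

lemma Q_c_integrable:
  assumes "integrable M (\<lambda>x. \<bar>x\<bar> powr r)" "r > 0"
  shows "set_integrable lborel {0<..<1} (\<lambda>t. \<bar>quantile M t - c\<bar> powr r)"
proof (rule set_integrable_bound)
  have "set_integrable lborel {0<..<1::real} (\<lambda>t. 2 powr r * (\<bar>quantile M t\<bar> powr r + \<bar>c\<bar> powr r))"
  proof (intro set_integrable_mult_right set_integral_add(1) Q_integrable assms)
    show "set_integrable lborel {0<..<1::real} (\<lambda>t. \<bar>c\<bar> powr r)"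
      unfolding set_integrable_def by (rule integrable_indicator) auto
  qed
  then show "set_integrable lborel {0<..<1::real} (\<lambda>t. 2 powr r * (\<bar>quantile M t\<bar> powr r + \<bar>c\<bar> powr r))" .
  show "set_borel_measurable lborel {0<..<1} (\<lambda>t. \<bar>quantile M t - c\<bar> powr r)"
    using q_meas_lborel unfolding set_borel_measurable_def
    by (subst borel_measurable_restrict_space_iff[symmetric]) auto
  show "AE t in lborel. t \<in> {0<..<1} \<longrightarrow> norm (\<bar>quantile M t - c\<bar> powr r) \<le> norm (2 powr r * (\<bar>quantile M t\<bar> powr r + \<bar>c\<bar> powr r))"
  proof (intro AE_I2 impI)
    fix t :: real
    have "\<bar>quantile M t - c\<bar> powr r \<le> (2 * max \<bar>quantile M t\<bar> \<bar>c\<bar>) powr r"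
      by (intro powr_mono2) (use assms in auto)
    also have "\<dots> = 2 powr r * max \<bar>quantile M t\<bar> \<bar>c\<bar> powr r"
      by (simp add: powr_mult)
    also have "\<dots> \<le> 2 powr r * (\<bar>quantile M t\<bar> powr r + \<bar>c\<bar> powr r)"
      by (intro mult_left_mono) (auto simp: max_def)
    finally show "norm (\<bar>quantile M t - c\<bar> powr r) \<le> norm (2 powr r * (\<bar>quantile M t\<bar> powr r + \<bar>c\<bar> powr r))"
      by simp
  qed
qed

end

lemma emeasure_delta:
  assumes p: "\<And>i. i \<in> {1..n} \<Longrightarrow> p i \<ge> 0" and A: "A \<in> sets borel"
  shows "emeasure (delta_px n p y) A = (\<Sum>i=1..n. ennreal (p i) * indicator A (y i))"
proof -
  let ?\<mu> = "\<lambda>A. \<Sum>i=1..n. ennreal (p i) * indicator A (y i)"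
  have 1: "sigma_algebra UNIV (sets borel)"
    using sets.sigma_algebra_axioms[of borel] by simp
  have 2: "positive (sets borel) ?\<mu>"
    unfolding positive_def by simp
  have 3: "countably_additive (sets borel) ?\<mu>"
    unfolding countably_additive_def
  proof (intro allI impI)
    fix B :: "nat \<Rightarrow> real set" assume "range B \<subseteq> sets borel" and d: "disjoint_family B" and "\<Union> (range B) \<in> sets borel"
    have "(\<Sum>j. \<Sum>i = 1..n. ennreal (p i) * indicator (B j) (y i))
        = (\<Sum>i = 1..n. \<Sum>j. ennreal (p i) * indicator (B j) (y i))"
      by (rule suminf_sum) (rule summableI)
    also have "\<dots> = (\<Sum>i = 1..n. ennreal (p i) * indicator (\<Union> (range B)) (y i))"
      by (simp add: suminf_indicator[OF d])
    finally show "(\<Sum>j. ?\<mu> (B j)) = ?\<mu> (\<Union> (range B))" .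
  qed
  show ?thesis unfolding delta_px_def
    by (rule emeasure_measure_of_sigma[OF 1 2 3 A])
qed

lemma cdf_delta:
  assumes p: "\<And>i. i \<in> {1..n} \<Longrightarrow> p i \<ge> 0"
  shows "Defs.cdf (delta_px n p y) x = (\<Sum>i=1..n. p i * (if y i \<le> x then 1 else 0))"
proof -
  have "emeasure (delta_px n p y) {..x} = (\<Sum>i=1..n. ennreal (p i) * indicator {..x} (y i))"
    by (rule emeasure_delta[OF p]) auto
  also have "\<dots> = (\<Sum>i=1..n. ennreal (p i * (if y i \<le> x then 1 else 0)))"
    by (intro sum.cong) (auto simp: indicator_def)
  also have "\<dots> = ennreal (\<Sum>i=1..n. p i * (if y i \<le> x then 1 else 0))"
    by (rule sum_ennreal) (use p in auto)
  moreover have "0 \<le> (\<Sum>i=1..n. p i * (if y i \<le> x then 1 else 0))"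
    by (intro sum_nonneg) (use p in auto)
  ultimately show ?thesis
    unfolding Defs.cdf_def measure_def by simp
qed

lemma Xi_mono:
  assumes "y \<in> Xi_n n" "1 \<le> i" "i \<le> j" "j \<le> n"
  shows "y i \<le> y j"
  using assms(3,4)
proof (induction j rule: dec_induct)
  case base then show ?case by simp
next
  case (step k)
  then have "y k \<le> y (Suc k)" using assms(1,2) unfolding Xi_n_def by auto
  with step show ?case by simp
qed

lemma Psum_mono: assumes "p \<in> Pi_n n" "i \<le> j" "j \<le> n" shows "Psum p i \<le> Psum p j"
proof -
  have "(\<Sum>k=1..i. p k) \<le> (\<Sum>k=1..j. p k)"
    using assms unfolding Pi_n_def by (intro sum_mono2) auto
  then show ?thesis by (simp add: Psum_def)
qed

lemma Psum_0[simp]: "Psum p 0 = 0" by (simp add: Psum_def)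
lemma Psum_n: "p \<in> Pi_n n \<Longrightarrow> Psum p n = 1" by (simp add: Psum_def Pi_n_def)
lemma Psum_Suc: "Psum p (Suc i) = Psum p i + p (Suc i)" by (simp add: Psum_def)
lemma Psum_nonneg: "p \<in> Pi_n n \<Longrightarrow> i \<le> n \<Longrightarrow> 0 \<le> Psum p i"
  using Psum_mono[of p n 0 i] by simp
lemma Psum_le1: "p \<in> Pi_n n \<Longrightarrow> i \<le> n \<Longrightarrow> Psum p i \<le> 1"
  using Psum_mono[of p n i n] Psum_n[of p n] by simp


lemma quantile_delta:
  assumes p: "p \<in> Pi_n n" and y: "y \<in> Xi_n n" and i: "i \<in> {1..n}"
    and t: "Psum p (i - 1) < t" "t < Psum p i"
  shows "quantile (delta_px n p y) t = y i"
proof -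
  have p0: "\<And>j. j \<in> {1..n} \<Longrightarrow> p j \<ge> 0" using p by (auto simp: Pi_n_def)
  have "{x. Defs.cdf (delta_px n p y) x \<le> t} = {..<y i}"
  proof (intro set_eqI iffI)
    fix x assume "x \<in> {x. Defs.cdf (delta_px n p y) x \<le> t}"
    then have le: "(\<Sum>j=1..n. p j * (if y j \<le> x then 1 else 0)) \<le> t"
      using cdf_delta[OF p0, where y=y and x=x] by simp
    show "x \<in> {..<y i}"
    proof (rule ccontr)
      assume "x \<notin> {..<y i}"
      then have xi: "y i \<le> x" by simp
      have "Psum p i = (\<Sum>j=1..i. p j * (if y j \<le> x then 1 else 0))"
        unfolding Psum_def
      proof (rule sum.cong[OF refl])
        fix j assume "j \<in> {1..i}"
        then have "y j \<le> y i" using Xi_mono[OF y, of j i] i by auto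
        then show "p j = p j * (if y j \<le> x then 1 else 0)" using xi by simp
      qed
      also have "\<dots> \<le> (\<Sum>j=1..n. p j * (if y j \<le> x then 1 else 0))"
      proof (rule sum_mono2)
        show "{1..i} \<subseteq> {1..n}" using i by auto
        show "\<And>b. b \<in> {1..n} - {1..i} \<Longrightarrow> 0 \<le> p b * (if y b \<le> x then 1 else 0)"
          using p0 by simp
      qed simp
      finally show False using le t by simp
    qed
  next
    fix x assume "x \<in> {..<y i}"
    then have xi: "x < y i" by simp
    have "(\<Sum>j=1..n. p j * (if y j \<le> x then 1 else 0)) = (\<Sum>j=1..i-1. p j * (if y j \<le> x then 1 else 0))"
    proof (rule sum.mono_neutral_cong_right)
      show "\<forall>j\<in>{1..n} - {1..i - 1}. p j * (if y j \<le> x then 1 else 0) = 0"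
      proof
        fix j assume "j \<in> {1..n} - {1..i - 1}"
        then have "y i \<le> y j" using Xi_mono[OF y, of i j] i by auto
        then show "p j * (if y j \<le> x then 1 else 0) = 0" using xi by auto
      qed
      show "finite {1..n}" by simp
      show "{1..i - 1} \<subseteq> {1..n}" using i by auto
    qed simp
    also have "\<dots> \<le> (\<Sum>j=1..i-1. p j)"
    proof (rule sum_mono)
      fix j assume "j \<in> {1..i-1}"
      then have "p j \<ge> 0" using p0 i by auto
      then show "p j * (if y j \<le> x then 1 else 0) \<le> p j" by simp
    qed
    also have "\<dots> = Psum p (i - 1)" by (simp add: Psum_def)
    finally have "(\<Sum>j=1..n. p j * (if y j \<le> x then 1 else 0)) \<le> t"
      using t by simp
    then show "x \<in> {x. Defs.cdf (delta_px n p y) x \<le> t}"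
      using cdf_delta[OF p0, where y=y and x=x] by simp
  qed
  then show ?thesis unfolding quantile_def by simp
qed



lemma powr_convex_nonneg:
  fixes r x y u :: real
  assumes r: "r \<ge> 1" and x: "x \<ge> 0" and y: "y \<ge> 0" and u: "0 \<le> u" "u \<le> 1"
  shows "(u * x + (1 - u) * y) powr r \<le> u * x powr r + (1 - u) * y powr r"
proof (cases "x = 0 \<or> y = 0")
  case True
  have key: "\<And>v z. 0 \<le> v \<Longrightarrow> v \<le> 1 \<Longrightarrow> 0 \<le> z \<Longrightarrow> (v * z) powr r \<le> v * z powr r"
  proof -
    fix v z :: real assume v: "0 \<le> v" "v \<le> 1" and z: "0 \<le> z"
    have "v powr r \<le> v powr 1"
      using powr_mono'[of 1 r v] v r by simp
    then have "v powr r \<le> v" using v by simp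
    then have "v powr r * z powr r \<le> v * z powr r" by (intro mult_right_mono) auto
    then show "(v * z) powr r \<le> v * z powr r" using v z by (simp add: powr_mult)
  qed
  show ?thesis
  proof (cases "x = 0")
    case True
    then show ?thesis using key[of "1 - u" y] u y r by simp
  next
    case False
    then have "y = 0" using \<open>x = 0 \<or> y = 0\<close> by simp
    then show ?thesis using key[of u x] u x r by simp
  qed
next
  case False
  then have xy: "x \<in> {0<..}" "y \<in> {0<..}" using x y by auto
  have "(\<lambda>x. x powr r) ((1 - (1 - u)) *\<^sub>R x + (1 - u) *\<^sub>R y) \<le> (1 - (1 - u)) * (\<lambda>x. x powr r) x + (1 - u) * (\<lambda>x. x powr r) y"
    by (rule convex_onD[OF powr_convex[OF r]]) (use u xy in auto)
  then show ?thesis by simp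
qed

lemma abs_powr_convex:
  fixes r x y u :: real
  assumes r: "r \<ge> 1" and u: "0 \<le> u" "u \<le> 1"
  shows "\<bar>u * x + (1 - u) * y\<bar> powr r \<le> u * \<bar>x\<bar> powr r + (1 - u) * \<bar>y\<bar> powr r"
proof -
  have "\<bar>u * x + (1 - u) * y\<bar> \<le> \<bar>u * x\<bar> + \<bar>(1 - u) * y\<bar>"
    by (rule abs_triangle_ineq)
  also have "\<dots> = u * \<bar>x\<bar> + (1 - u) * \<bar>y\<bar>"
    using u by (simp add: abs_mult)
  finally have "\<bar>u * x + (1 - u) * y\<bar> \<le> u * \<bar>x\<bar> + (1 - u) * \<bar>y\<bar>" .
  then have "\<bar>u * x + (1 - u) * y\<bar> powr r \<le> (u * \<bar>x\<bar> + (1 - u) * \<bar>y\<bar>) powr r"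
    using r by (intro powr_mono2) auto
  also have "\<dots> \<le> u * \<bar>x\<bar> powr r + (1 - u) * \<bar>y\<bar> powr r"
    by (rule powr_convex_nonneg) (use r u in auto)
  finally show ?thesis .
qed

lemma powr_strict_mid_pos:
  fixes r x y :: real
  assumes r: "r > 1" and xy: "0 < x" "x < y"
  shows "((x + y) / 2) powr r < (x powr r + y powr r) / 2"
proof -
  define m where "m = (x + y) / 2"
  have m: "x < m" "m < y" "m - x = (y - x) / 2" "y - m = (y - x) / 2"
    using xy by (simp_all add: m_def field_simps)
  have D: "\<And>z. 0 < z \<Longrightarrow> DERIV (\<lambda>z. z powr r) z :> r * z powr (r - 1)"
    by (auto intro!: derivative_eq_intros simp: powr_diff field_simps)
  obtain z1 where z1: "m < z1" "z1 < y" "y powr r - m powr r = (y - m) * (r * z1 powr (r - 1))"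
    using MVT2[of m y "\<lambda>z. z powr r" "\<lambda>z. r * z powr (r - 1)"] D xy m by force
  obtain z2 where z2: "x < z2" "z2 < m" "m powr r - x powr r = (m - x) * (r * z2 powr (r - 1))"
    using MVT2[of x m "\<lambda>z. z powr r" "\<lambda>z. r * z powr (r - 1)"] D xy m by force
  have "z2 powr (r - 1) < z1 powr (r - 1)"
    using z1 z2 xy r by (intro powr_less_mono2) auto
  then have "((y - x) / 2) * (r * z2 powr (r - 1)) < ((y - x) / 2) * (r * z1 powr (r - 1))"
    using xy r by (intro mult_strict_left_mono) auto
  moreover have "m powr r - x powr r = ((y - x) / 2) * (r * z2 powr (r - 1))"
    using z2(3) m(3) by simp
  moreover have "y powr r - m powr r = ((y - x) / 2) * (r * z1 powr (r - 1))"
    using z1(3) m(4) by simp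
  ultimately have "m powr r - x powr r < y powr r - m powr r"
    by linarith
  then show ?thesis unfolding m_def[symmetric] by simp
qed

lemma powr_strict_mid_nonneg:
  fixes r x y :: real
  assumes r: "r > 1" and xy: "0 \<le> x" "x < y"
  shows "((x + y) / 2) powr r < (x powr r + y powr r) / 2"
proof (cases "x = 0")
  case True
  have "(y / 2) powr r = y powr r / 2 powr r" using xy by (simp add: powr_divide)
  also have "\<dots> < y powr r / 2"
  proof -
    have "2 powr 1 < 2 powr r" using r by (intro powr_less_mono) auto
    then show ?thesis using xy by (intro divide_strict_left_mono) auto
  qed
  finally show ?thesis using True by simp
next
  case False
  then show ?thesis using powr_strict_mid_pos[OF r, of x y] xy by simp
qed

lemma abs_powr_strict_mid:
  fixes r u v :: real
  assumes r: "r > 1" and uv: "u \<noteq> v"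
  shows "\<bar>(u + v) / 2\<bar> powr r < (\<bar>u\<bar> powr r + \<bar>v\<bar> powr r) / 2"
proof (cases "\<bar>u\<bar> = \<bar>v\<bar>")
  case True
  then have "v = - u" "u \<noteq> 0" using uv by (auto simp: abs_eq_iff)
  then show ?thesis by simp
next
  case False
  have le: "\<bar>(u + v) / 2\<bar> \<le> (\<bar>u\<bar> + \<bar>v\<bar>) / 2" by simp
  have "\<bar>(u + v) / 2\<bar> powr r \<le> ((\<bar>u\<bar> + \<bar>v\<bar>) / 2) powr r"
    using r by (intro powr_mono2[OF _ _ le]) auto
  also have "\<dots> < (\<bar>u\<bar> powr r + \<bar>v\<bar> powr r) / 2"
  proof (cases "\<bar>u\<bar> < \<bar>v\<bar>")
    case True
    then show ?thesis using powr_strict_mid_nonneg[OF r, of "\<bar>u\<bar>" "\<bar>v\<bar>"] by simp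
  next
    case False
    then have "\<bar>v\<bar> < \<bar>u\<bar>" using \<open>\<bar>u\<bar> \<noteq> \<bar>v\<bar>\<close> by simp
    then show ?thesis using powr_strict_mid_nonneg[OF r, of "\<bar>v\<bar>" "\<bar>u\<bar>"] by (simp add: add.commute)
  qed
  finally show ?thesis .
qed


lemma set_int_nonneg:
  fixes g :: "real \<Rightarrow> real"
  assumes "\<And>t. t \<in> A \<Longrightarrow> 0 \<le> g t"
  shows "0 \<le> (LINT t:A|lborel. g t)"
  unfolding set_lebesgue_integral_def
  by (rule Bochner_Integration.integral_nonneg) (use assms in \<open>auto simp: indicator_def\<close>)

lemma set_int_subset_le:
  fixes g :: "real \<Rightarrow> real"
  assumes "set_integrable lborel A g" "B \<in> sets lborel" "B \<subseteq> A" "\<And>t. t \<in> A \<Longrightarrow> 0 \<le> g t"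
  shows "(LINT t:B|lborel. g t) \<le> (LINT t:A|lborel. g t)"
proof -
  have iB: "set_integrable lborel B g" by (rule set_integrable_subset[OF assms(1-3)])
  show ?thesis
    unfolding set_lebesgue_integral_def
  proof (rule integral_mono)
    show "integrable lborel (\<lambda>x. indicat_real B x *\<^sub>R g x)" using iB by (simp add: set_integrable_def)
    show "integrable lborel (\<lambda>x. indicat_real A x *\<^sub>R g x)" using assms(1) by (simp add: set_integrable_def)
    fix t show "indicat_real B t *\<^sub>R g t \<le> indicat_real A t *\<^sub>R g t"
      using assms(3,4) by (auto simp: indicator_def)
  qed
qed

lemma set_int_pos:
  fixes g :: "real \<Rightarrow> real"
  assumes ab: "a < b" and int: "set_integrable lborel {a<..<b} g" and pos: "\<And>t. t \<in> {a<..<b} \<Longrightarrow> 0 < g t"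
  shows "0 < (LINT t:{a<..<b}|lborel. g t)"
proof -
  let ?h = "\<lambda>t. indicat_real {a<..<b} t *\<^sub>R g t"
  have ih: "integrable lborel ?h" using int by (simp add: set_integrable_def)
  have nn: "AE t in lborel. 0 \<le> ?h t" using pos by (auto simp: indicator_def less_imp_le)
  have ge: "0 \<le> (LINT t:{a<..<b}|lborel. g t)"
    by (rule set_int_nonneg) (use pos in \<open>auto simp: less_imp_le\<close>)
  show ?thesis
  proof (rule ccontr)
    assume "\<not> ?thesis"
    then have "integral\<^sup>L lborel ?h = 0" using ge unfolding set_lebesgue_integral_def by simp
    then have "AE t in lborel. ?h t = 0" using integral_nonneg_eq_0_iff_AE[OF ih nn] by simp
    then have "AE t in lborel. t \<notin> {a<..<b}"
    proof eventually_elim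
      case (elim t)
      show ?case
      proof
        assume "t \<in> {a<..<b}"
        then have "0 < g t" by (rule pos)
        with elim \<open>t \<in> {a<..<b}\<close> show False by simp
      qed
    qed
    then have "emeasure lborel {a<..<b} = 0"
      by (subst (asm) AE_iff_measurable[of "{a<..<b}"]) auto
    then show False using ab by simp
  qed
qed

definition Lf :: "real \<Rightarrow> (real \<Rightarrow> real) \<Rightarrow> real \<Rightarrow> real \<Rightarrow> real \<Rightarrow> real" where
  "Lf r f a b c = (LINT t:{a<..<b}|lborel. \<bar>f t - c\<bar> powr r)"

locale Lsetup =
  fixes r :: real and f :: "real \<Rightarrow> real" and a b :: real
  assumes ab: "a < b" and r1: "1 \<le> r"
    and int: "\<And>c. set_integrable lborel {a<..<b} (\<lambda>t. \<bar>f t - c\<bar> powr r)"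
    and mono: "mono_on {a<..<b} f"
begin

abbreviation "L \<equiv> Lf r f a b"

lemma L_nonneg: "0 \<le> L c"
  unfolding Lf_def by (rule set_int_nonneg) simp

lemma L_convex: "convex_on UNIV L"
proof (rule convex_onI)
  fix u x y :: real assume u: "0 < u" "u < 1"
  have "L ((1 - u) *\<^sub>R x + u *\<^sub>R y) \<le>
      (LINT t:{a<..<b}|lborel. (1 - u) * \<bar>f t - x\<bar> powr r + u * \<bar>f t - y\<bar> powr r)"
    unfolding Lf_def
  proof (rule set_integral_mono)
    show "set_integrable lborel {a<..<b} (\<lambda>t. \<bar>f t - ((1 - u) *\<^sub>R x + u *\<^sub>R y)\<bar> powr r)"
      by (rule int)
    show "set_integrable lborel {a<..<b} (\<lambda>t. (1 - u) * \<bar>f t - x\<bar> powr r + u * \<bar>f t - y\<bar> powr r)"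
      by (intro set_integral_add(1) set_integrable_mult_right int)
    fix t
    have "\<bar>f t - ((1 - u) *\<^sub>R x + u *\<^sub>R y)\<bar> powr r = \<bar>(1 - u) * (f t - x) + (1 - (1 - u)) * (f t - y)\<bar> powr r"
      by (simp add: algebra_simps)
    also have "\<dots> \<le> (1 - u) * \<bar>f t - x\<bar> powr r + (1 - (1 - u)) * \<bar>f t - y\<bar> powr r"
      by (rule abs_powr_convex) (use r1 u in auto)
    finally show "\<bar>f t - ((1 - u) *\<^sub>R x + u *\<^sub>R y)\<bar> powr r \<le> (1 - u) * \<bar>f t - x\<bar> powr r + u * \<bar>f t - y\<bar> powr r"
      by simp
  qed
  also have "\<dots> = (1 - u) * L x + u * L y"
    unfolding Lf_def
    by (subst set_integral_add(2)) (auto intro: int)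
  finally show "L ((1 - u) *\<^sub>R x + u *\<^sub>R y) \<le> (1 - u) * L x + u * L y" .
qed simp

lemma L_cont: "continuous_on UNIV L"
  by (rule convex_on_continuous[OF open_UNIV L_convex])

lemma L_coercive: "\<exists>K>0. \<forall>c. \<bar>c\<bar> > K \<longrightarrow> L c > L 0"
proof -
  define m where "m = (a + b) / 2"
  have m: "a < m" "m < b" using ab by (auto simp: m_def)
  define K0 where "K0 = max 2 (2 * \<bar>f m\<bar>)"
  have lower: "L c \<ge> (b - a) / 2 * (\<bar>c\<bar> / 2)" if c: "\<bar>c\<bar> \<ge> K0" for c
  proof (cases "c \<ge> 0")
    case True
    have "(m - a) * (c / 2) = (LINT t:{a<..m}|lborel. c / 2)"
      using m by (subst set_integral_const) auto
    also have "\<dots> \<le> (LINT t:{a<..m}|lborel. \<bar>f t - c\<bar> powr r)"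
    proof (rule set_integral_mono)
      show "set_integrable lborel {a<..m} (\<lambda>t. c / 2)"
        unfolding set_integrable_def by (rule integrable_indicator) (use m in \<open>auto simp: emeasure_lborel_Ioc\<close>)
      show "set_integrable lborel {a<..m} (\<lambda>t. \<bar>f t - c\<bar> powr r)"
        by (rule set_integrable_subset[OF int]) (use m in auto)
      fix t assume t: "t \<in> {a<..m}"
      then have "f t \<le> f m" using mono m by (intro mono_onD[OF mono]) auto
      then have ge: "c - f t \<ge> c / 2" "c - f t \<ge> 1" using c True unfolding K0_def by auto
      have "c / 2 \<le> \<bar>f t - c\<bar>" using ge by auto
      also have "\<dots> = \<bar>f t - c\<bar> powr 1" by simp
      also have "\<dots> \<le> \<bar>f t - c\<bar> powr r" using ge r1 by (intro powr_mono) auto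
      finally show "c / 2 \<le> \<bar>f t - c\<bar> powr r" .
    qed
    also have "\<dots> \<le> L c" unfolding Lf_def
      by (rule set_int_subset_le[OF int]) (use m in auto)
    finally show ?thesis using True m by (simp add: m_def field_simps)
  next
    case False
    have "(b - m) * (- c / 2) = (LINT t:{m..<b}|lborel. - c / 2)"
      using m by (subst set_integral_const) auto
    also have "\<dots> \<le> (LINT t:{m..<b}|lborel. \<bar>f t - c\<bar> powr r)"
    proof (rule set_integral_mono)
      show "set_integrable lborel {m..<b} (\<lambda>t. - c / 2)"
        unfolding set_integrable_def by (rule integrable_indicator) (use m in \<open>auto simp: emeasure_lborel_Ico\<close>)
      show "set_integrable lborel {m..<b} (\<lambda>t. \<bar>f t - c\<bar> powr r)"
        by (rule set_integrable_subset[OF int]) (use m in auto)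
      fix t assume t: "t \<in> {m..<b}"
      then have "f m \<le> f t" using mono m by (intro mono_onD[OF mono]) auto
      then have ge: "f t - c \<ge> - c / 2" "f t - c \<ge> 1" using c False unfolding K0_def by auto
      have "- c / 2 \<le> \<bar>f t - c\<bar>" using ge by auto
      also have "\<dots> = \<bar>f t - c\<bar> powr 1" by simp
      also have "\<dots> \<le> \<bar>f t - c\<bar> powr r" using ge r1 by (intro powr_mono) auto
      finally show "- c / 2 \<le> \<bar>f t - c\<bar> powr r" .
    qed
    also have "\<dots> \<le> L c" unfolding Lf_def
      by (rule set_int_subset_le[OF int]) (use m in auto)
    finally show ?thesis using False m by (simp add: m_def field_simps)
  qed
  define K where "K = max K0 (4 * L 0 / (b - a) + 1)"
  have "K > 0" unfolding K_def K0_def by auto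
  moreover have "L c > L 0" if c: "\<bar>c\<bar> > K" for c
  proof -
    have "\<bar>c\<bar> \<ge> K0" using c unfolding K_def by auto
    then have "L c \<ge> (b - a) / 2 * (\<bar>c\<bar> / 2)" by (rule lower)
    moreover have "\<bar>c\<bar> > 4 * L 0 / (b - a)" using c unfolding K_def by auto
    then have "(b - a) / 2 * (\<bar>c\<bar> / 2) > L 0"
      using ab by (simp add: field_simps)
    ultimately show ?thesis by linarith
  qed
  ultimately show ?thesis by blast
qed

lemma L_min_exists: "\<exists>c. \<forall>c'. L c \<le> L c'"
proof -
  obtain K where K: "K > 0" "\<And>c. \<bar>c\<bar> > K \<Longrightarrow> L c > L 0" using L_coercive by blast
  have "\<exists>x\<in>{-K..K}. \<forall>y\<in>{-K..K}. L x \<le> L y"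
    by (rule continuous_attains_inf) (use K in \<open>auto intro: continuous_on_subset[OF L_cont]\<close>)
  then obtain c where c: "c \<in> {-K..K}" "\<And>y. y \<in> {-K..K} \<Longrightarrow> L c \<le> L y" by blast
  have "L c \<le> L c'" for c'
  proof (cases "c' \<in> {-K..K}")
    case True then show ?thesis by (rule c(2))
  next
    case False
    then have "\<bar>c'\<bar> > K" by auto
    then have "L c' > L 0" by (rule K(2))
    moreover have "L c \<le> L 0" using c(2)[of 0] K by auto
    ultimately show ?thesis by simp
  qed
  then show ?thesis by blast
qed

lemma L_unique:
  assumes r: "r > 1" and c1: "\<forall>c'. L c1 \<le> L c'" and c2: "\<forall>c'. L c2 \<le> L c'"
  shows "c1 = c2"
proof (rule ccontr)
  assume ne: "c1 \<noteq> c2"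
  define m where "m = (c1 + c2) / 2"
  let ?g = "\<lambda>t. (1/2) * \<bar>f t - c1\<bar> powr r + (1/2) * \<bar>f t - c2\<bar> powr r - \<bar>f t - m\<bar> powr r"
  have "0 < (LINT t:{a<..<b}|lborel. ?g t)"
  proof (rule set_int_pos[OF ab])
    show "set_integrable lborel {a<..<b} ?g"
      by (intro set_integral_diff(1) set_integral_add(1) set_integrable_mult_right int)
    fix t
    have eq: "((f t - c1) + (f t - c2)) / 2 = f t - m" by (simp add: m_def field_simps)
    have "\<bar>((f t - c1) + (f t - c2)) / 2\<bar> powr r < (\<bar>f t - c1\<bar> powr r + \<bar>f t - c2\<bar> powr r) / 2"
      by (rule abs_powr_strict_mid[OF r]) (use ne in auto)
    then have "\<bar>f t - m\<bar> powr r < (\<bar>f t - c1\<bar> powr r + \<bar>f t - c2\<bar> powr r) / 2"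
      unfolding eq .
    then show "0 < ?g t" by simp
  qed
  also have "(LINT t:{a<..<b}|lborel. ?g t) = (1/2) * L c1 + (1/2) * L c2 - L m"
    unfolding Lf_def
    by (subst set_integral_diff(2), (intro set_integral_add(1) set_integrable_mult_right int)+)
       (subst set_integral_add(2), (intro set_integrable_mult_right int)+, simp)
  finally have "0 < 1 / 2 * L c1 + 1 / 2 * L c2 - L m" .
  moreover have "L c1 \<le> L m" "L c2 \<le> L m" using c1 c2 by auto
  ultimately show False by linarith
qed

lemma L_clip_le:
  assumes r: "r > 1" and tau: "\<forall>c'. L tau \<le> L c'" and v: "\<And>t. t \<in> {a<..<b} \<Longrightarrow> f t \<le> v"
  shows "tau \<le> v"
proof (rule ccontr)
  assume "\<not> tau \<le> v"
  then have tv: "v < tau" by simp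
  have "L v \<le> L tau" unfolding Lf_def
  proof (rule set_integral_mono[OF int int])
    fix t assume "t \<in> {a<..<b}"
    then have "\<bar>f t - v\<bar> \<le> \<bar>f t - tau\<bar>" using v[of t] tv by auto
    then show "\<bar>f t - v\<bar> powr r \<le> \<bar>f t - tau\<bar> powr r" using r by (intro powr_mono2) auto
  qed
  then have "\<forall>c'. L v \<le> L c'" using tau by (meson order_trans)
  then have "v = tau" using L_unique[OF r _ tau] by blast
  then show False using tv by simp
qed

lemma L_clip_ge:
  assumes r: "r > 1" and tau: "\<forall>c'. L tau \<le> L c'" and v: "\<And>t. t \<in> {a<..<b} \<Longrightarrow> v \<le> f t"
  shows "v \<le> tau"
proof (rule ccontr)
  assume "\<not> v \<le> tau"
  then have tv: "tau < v" by simp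
  have "L v \<le> L tau" unfolding Lf_def
  proof (rule set_integral_mono[OF int int])
    fix t assume "t \<in> {a<..<b}"
    then have "\<bar>f t - v\<bar> \<le> \<bar>f t - tau\<bar>" using v[of t] tv by auto
    then show "\<bar>f t - v\<bar> powr r \<le> \<bar>f t - tau\<bar> powr r" using r by (intro powr_mono2) auto
  qed
  then have "\<forall>c'. L v \<le> L c'" using tau by (meson order_trans)
  then have "v = tau" using L_unique[OF r _ tau] by blast
  then show False using tv by simp
qed

end


lemma step_eq:
  fixes a b w k :: real
  assumes "a \<le> w" "w \<le> b"
  shows "(\<lambda>t. indicat_real {a<..<b} t *\<^sub>R (if t < w then k else - k))
       = (\<lambda>t. k * indicat_real {a<..<w} t - k * indicat_real ({w..<b} \<inter> {a<..}) t)"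
  using assms by (auto simp: indicator_def fun_eq_iff)

lemma Ico_cap:
  fixes a b w :: real
  assumes "a \<le> w" "w \<le> b"
  shows "{w..<b} \<inter> {a<..} = (if w = a then {a<..<b} else {w..<b})"
  using assms by auto

lemma step_integrable:
  fixes a b w k :: real
  assumes "a \<le> w" "w \<le> b"
  shows "set_integrable lborel {a<..<b} (\<lambda>t. if t < w then k else - k)"
  unfolding set_integrable_def step_eq[OF assms]
  using assms by (intro Bochner_Integration.integrable_diff integrable_mult_right integrable_real_indicator)
    (auto simp: emeasure_lborel_Ioo emeasure_lborel_Ico Ico_cap)

lemma step_integral:
  fixes a b w k :: real
  assumes "a \<le> w" "w \<le> b"
  shows "(LINT t:{a<..<b}|lborel. (if t < w then k else - k)) = k * (2 * w - a - b)"
proof -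
  have i1: "integrable lborel (indicat_real {a<..<w})" using assms
    by (intro integrable_real_indicator) (auto simp: emeasure_lborel_Ioo)
  have i2: "integrable lborel (indicat_real ({w..<b} \<inter> {a<..}))" using assms
    by (intro integrable_real_indicator) (auto simp: emeasure_lborel_Ico Ico_cap)
  have m2: "measure lborel ({w..<b} \<inter> {a<..}) = b - w"
    using assms by (simp add: Ico_cap)
  have "(LINT t:{a<..<b}|lborel. (if t < w then k else - k))
      = integral\<^sup>L lborel (\<lambda>t. k * indicat_real {a<..<w} t - k * indicat_real ({w..<b} \<inter> {a<..}) t)"
    unfolding set_lebesgue_integral_def step_eq[OF assms] ..
  also have "\<dots> = k * (w - a) - k * (b - w)"
    using i1 i2 assms m2 by (subst Bochner_Integration.integral_diff) auto
  also have "\<dots> = k * (2 * w - a - b)" by (simp add: algebra_simps)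
  finally show ?thesis .
qed

context real_distribution
begin

lemma Qchar:
  assumes s: "0 < s" "s < 1"
  shows "c \<in> Q_set M s \<longleftrightarrow> s \<le> Defs.cdf M c \<and> (\<forall>x<c. Defs.cdf M x \<le> s)"
proof -
  interpret C: cdf_distribution M by unfold_locales
  have 1: "Inf {x. Defs.cdf M x \<ge> s} \<le> c \<longleftrightarrow> s \<le> Defs.cdf M c"
    using C.pseudoinverse[OF s, of c] by (simp add: cdf_eq)
  have 2: "c \<le> Sup {x. Defs.cdf M x \<le> s} \<longleftrightarrow> (\<forall>x<c. Defs.cdf M x \<le> s)"
  proof
    assume c: "c \<le> Sup {x. Defs.cdf M x \<le> s}"
    show "\<forall>x<c. Defs.cdf M x \<le> s"
    proof (intro allI impI)
      fix x assume "x < c"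
      then have "x < Sup {x. Defs.cdf M x \<le> s}" using c by simp
      then obtain y where y: "y \<in> {x. Defs.cdf M x \<le> s}" "x < y"
        using less_cSupD[OF q_ne[OF s(1)]] by blast
      then show "Defs.cdf M x \<le> s"
        using cdf_nondecreasing[of x y] by (simp add: cdf_eq)
    qed
  next
    assume h: "\<forall>x<c. Defs.cdf M x \<le> s"
    show "c \<le> Sup {x. Defs.cdf M x \<le> s}"
    proof (rule dense_le)
      fix y assume "y < c"
      show "y \<le> Sup {x. Defs.cdf M x \<le> s}"
      proof (rule cSup_upper)
        show "y \<in> {x. Defs.cdf M x \<le> s}" using h \<open>y < c\<close> by simp
        show "bdd_above {x. Defs.cdf M x \<le> s}" by (rule q_bdd[OF s(2)])
      qed
    qed
  qed
  show ?thesis unfolding Q_set_def using 1 2 by auto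
qed

lemma Qinf_mem:
  assumes s: "0 < s" "s < 1"
  shows "s \<le> Defs.cdf M (Inf {x. Defs.cdf M x \<ge> s})"
    and "\<And>x. x < Inf {x. Defs.cdf M x \<ge> s} \<Longrightarrow> Defs.cdf M x \<le> s"
proof -
  interpret C: cdf_distribution M by unfold_locales
  show "s \<le> Defs.cdf M (Inf {x. Defs.cdf M x \<ge> s})"
    using C.pseudoinverse[OF s, of "Inf {x. Defs.cdf M x \<ge> s}"] by (simp add: cdf_eq)
  fix x assume "x < Inf {x. Defs.cdf M x \<ge> s}"
  then show "Defs.cdf M x \<le> s"
    using C.pseudoinverse[OF s, of x] by (simp add: cdf_eq)
qed

lemma Qinf_mono:
  assumes s: "0 < s" "s \<le> s'" "s' < 1"
  shows "Inf {x. Defs.cdf M x \<ge> s} \<le> Inf {x. Defs.cdf M x \<ge> s'}"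
proof -
  interpret C: cdf_distribution M by unfold_locales
  have "s' \<le> Defs.cdf M (Inf {x. Defs.cdf M x \<ge> s'})"
    using Qinf_mem(1)[of s'] s by simp
  then have "s \<le> Defs.cdf M (Inf {x. Defs.cdf M x \<ge> s'})" using s by simp
  then show ?thesis
    using C.pseudoinverse[of s "Inf {x. Defs.cdf M x \<ge> s'}"] s by (simp add: cdf_eq)
qed

lemma L1_min_iff:
  assumes a: "0 \<le> a" and ab: "a < b" and b: "b \<le> 1"
    and int: "\<And>c. set_integrable lborel {a<..<b} (\<lambda>t. \<bar>quantile M t - c\<bar> powr 1)"
  shows "(\<forall>c'. Lf 1 (quantile M) a b c \<le> Lf 1 (quantile M) a b c') \<longleftrightarrow>
         ((a + b) / 2 \<le> Defs.cdf M c \<and> (\<forall>x<c. Defs.cdf M x \<le> (a + b) / 2))"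
proof -
  define s where "s = (a + b) / 2"
  define f where "f = quantile M"
  have s: "a < s" "s < b" "0 < s" "s < 1" using a ab b by (auto simp: s_def)
  have int': "\<And>c. set_integrable lborel {a<..<b} (\<lambda>t. \<bar>f t - c\<bar>)"
    using int unfolding f_def by simp
  have L: "\<And>c. Lf 1 (quantile M) a b c = (LINT t:{a<..<b}|lborel. \<bar>f t - c\<bar>)"
    unfolding Lf_def f_def by simp
  have diff: "\<And>c c'. Lf 1 (quantile M) a b c' - Lf 1 (quantile M) a b c
      = (LINT t:{a<..<b}|lborel. \<bar>f t - c'\<bar> - \<bar>f t - c\<bar>)"
    unfolding L by (subst set_integral_diff(2)[OF int' int']) simp
  have t01: "\<And>t. t \<in> {a<..<b} \<Longrightarrow> 0 < t \<and> t < 1" using a b by auto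
  show ?thesis unfolding s_def[symmetric]
  proof
    assume min: "\<forall>c'. Lf 1 (quantile M) a b c \<le> Lf 1 (quantile M) a b c'"
    show "s \<le> Defs.cdf M c \<and> (\<forall>x<c. Defs.cdf M x \<le> s)"
    proof (rule ccontr)
      assume "\<not> ?thesis"
      then consider "Defs.cdf M c < s" | x where "x < c" "Defs.cdf M x > s" by force
      then show False
      proof cases
        case 1
        then have lt: "Distribution_Functions.cdf M c < s" by (simp add: cdf_eq)
        have "eventually (\<lambda>x. Distribution_Functions.cdf M x < s) (at_right c)"
          using cdf_is_right_cont[of c] lt unfolding continuous_within
          by (simp add: order_tendstoD(2))
        then obtain d where d: "d > c" "\<And>y. c < y \<Longrightarrow> y < d \<Longrightarrow> Distribution_Functions.cdf M y < s"
          unfolding eventually_at_right_field by blast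
        define c' where "c' = (c + d) / 2"
        have c': "c < c'" "Defs.cdf M c' < s" using d unfolding c'_def by (auto simp: cdf_eq)
        define w where "w = max (Defs.cdf M c') a"
        have w: "a \<le> w" "w \<le> b" "w < s" using c' s unfolding w_def by auto
        have "Lf 1 (quantile M) a b c' - Lf 1 (quantile M) a b c \<le>
            (LINT t:{a<..<b}|lborel. (if t < w then (c' - c) else - (c' - c)))"
          unfolding diff
        proof (rule set_integral_mono)
          show "set_integrable lborel {a<..<b} (\<lambda>t. \<bar>f t - c'\<bar> - \<bar>f t - c\<bar>)"
            by (intro set_integral_diff(1) int')
          show "set_integrable lborel {a<..<b} (\<lambda>t. if t < w then c' - c else - (c' - c))"
            by (rule step_integrable[OF w(1,2)])
          fix t assume t: "t \<in> {a<..<b}"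
          show "\<bar>f t - c'\<bar> - \<bar>f t - c\<bar> \<le> (if t < w then c' - c else - (c' - c))"
          proof (cases "t < w")
            case False
            have "c' \<le> f t" unfolding f_def
            proof (rule q_R3)
              show "0 < t" "t < 1" using t01[OF t] by auto
              fix x assume "x < c'"
              then have "Defs.cdf M x \<le> Defs.cdf M c'"
                using cdf_nondecreasing[of x c'] by (simp add: cdf_eq)
              then show "Defs.cdf M x \<le> t" using False unfolding w_def by simp
            qed
            then show ?thesis using False c' by simp
          qed (use c' in simp)
        qed
        also have "\<dots> = (c' - c) * (2 * w - a - b)" by (rule step_integral[OF w(1,2)])
        also have "\<dots> < 0" using c' w s unfolding s_def by (intro mult_pos_neg) auto
        finally show False using min by smt
      next
        case 2
        define c' where "c' = (x + c) / 2"
        have c': "x < c'" "c' < c" using 2 unfolding c'_def by auto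
        have Fc': "s < Defs.cdf M c'"
          using 2 cdf_nondecreasing[of x c'] c' by (simp add: cdf_eq)
        define w where "w = min (Defs.cdf M c') b"
        have w: "a \<le> w" "w \<le> b" "s < w" using Fc' s unfolding w_def by auto
        have "Lf 1 (quantile M) a b c' - Lf 1 (quantile M) a b c \<le>
            (LINT t:{a<..<b}|lborel. (if t < w then - (c - c') else - (- (c - c'))))"
          unfolding diff
        proof (rule set_integral_mono)
          show "set_integrable lborel {a<..<b} (\<lambda>t. \<bar>f t - c'\<bar> - \<bar>f t - c\<bar>)"
            by (intro set_integral_diff(1) int')
          show "set_integrable lborel {a<..<b} (\<lambda>t. if t < w then - (c - c') else - (- (c - c')))"
            by (rule step_integrable[OF w(1,2)])
          fix t assume t: "t \<in> {a<..<b}"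
          show "\<bar>f t - c'\<bar> - \<bar>f t - c\<bar> \<le> (if t < w then - (c - c') else - (- (c - c')))"
          proof (cases "t < w")
            case True
            have "f t \<le> c'" unfolding f_def
              by (rule q_R1) (use t01[OF t] True in \<open>auto simp: w_def\<close>)
            then show ?thesis using True c' by simp
          qed (use c' in simp)
        qed
        also have "\<dots> = - (c - c') * (2 * w - a - b)" by (rule step_integral[OF w(1,2)])
        also have "\<dots> < 0" using c' w s unfolding s_def by (intro mult_neg_pos) auto
        finally show False using min by smt
      qed
    qed
  next
    assume h: "s \<le> Defs.cdf M c \<and> (\<forall>x<c. Defs.cdf M x \<le> s)"
    show "\<forall>c'. Lf 1 (quantile M) a b c \<le> Lf 1 (quantile M) a b c'"
    proof
      fix c'
      consider "c < c'" | "c' < c" | "c' = c" by linarith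
      then show "Lf 1 (quantile M) a b c \<le> Lf 1 (quantile M) a b c'"
      proof cases
        case 1
        have "(LINT t:{a<..<b}|lborel. (if t < s then (c' - c) else - (c' - c))) = (c' - c) * (2 * s - a - b)"
          by (rule step_integral) (use s in auto)
        also have "\<dots> = 0" by (simp add: s_def field_simps)
        finally have "0 = (LINT t:{a<..<b}|lborel. (if t < s then (c' - c) else - (c' - c)))" by simp
        also have "\<dots> \<le> Lf 1 (quantile M) a b c' - Lf 1 (quantile M) a b c"
          unfolding diff
        proof (rule set_integral_mono)
          show "set_integrable lborel {a<..<b} (\<lambda>t. \<bar>f t - c'\<bar> - \<bar>f t - c\<bar>)"
            by (intro set_integral_diff(1) int')
          show "set_integrable lborel {a<..<b} (\<lambda>t. if t < s then c' - c else - (c' - c))"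
            by (rule step_integrable) (use s in auto)
          fix t assume t: "t \<in> {a<..<b}"
          show "(if t < s then c' - c else - (c' - c)) \<le> \<bar>f t - c'\<bar> - \<bar>f t - c\<bar>"
          proof (cases "t < s")
            case True
            have "f t \<le> c" unfolding f_def
              by (rule q_R1) (use t01[OF t] True h in auto)
            then show ?thesis using True 1 by simp
          qed (use 1 in \<open>auto simp: abs_if\<close>)
        qed
        finally show ?thesis by simp
      next
        case 2
        have "(LINT t:{a<..<b}|lborel. (if t < s then - (c - c') else - (- (c - c')))) = (- (c - c')) * (2 * s - a - b)"
          by (rule step_integral) (use s in auto)
        also have "\<dots> = 0" by (simp add: s_def field_simps)
        finally have "0 = (LINT t:{a<..<b}|lborel. (if t < s then - (c - c') else - (- (c - c'))))" by simp
        also have "\<dots> \<le> Lf 1 (quantile M) a b c' - Lf 1 (quantile M) a b c"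
          unfolding diff
        proof (rule set_integral_mono)
          show "set_integrable lborel {a<..<b} (\<lambda>t. \<bar>f t - c'\<bar> - \<bar>f t - c\<bar>)"
            by (intro set_integral_diff(1) int')
          show "set_integrable lborel {a<..<b} (\<lambda>t. if t < s then - (c - c') else - (- (c - c')))"
            by (rule step_integrable) (use s in auto)
          fix t assume t: "t \<in> {a<..<b}"
          show "(if t < s then - (c - c') else - (- (c - c'))) \<le> \<bar>f t - c'\<bar> - \<bar>f t - c\<bar>"
          proof (cases "t < s")
            case False
            have "c \<le> f t" unfolding f_def
            proof (rule q_R3)
              show "0 < t" "t < 1" using t01[OF t] by auto
              fix x assume "x < c"
              then show "Defs.cdf M x \<le> t" using h False by force
            qed
            then show ?thesis using False 2 by simp
          qed (use 2 in \<open>auto simp: abs_if\<close>)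
        qed
        finally show ?thesis by simp
      qed simp
    qed
  qed
qed

end


lemma delta_real_distribution:
  assumes p: "p \<in> Pi_n n"
  shows "real_distribution (delta_px n p y)"
proof -
  have p0: "\<And>i. i \<in> {1..n} \<Longrightarrow> p i \<ge> 0" using p by (auto simp: Pi_n_def)
  have U: "UNIV \<in> sets borel" by (rule borel_open) simp
  have sp: "space (delta_px n p y) = UNIV"
    unfolding delta_px_def by (subst space_measure_of) (auto intro: sets.sets_into_space)
  have st: "sets (delta_px n p y) = sets borel"
    unfolding delta_px_def by (subst sets_measure_of) (use U in \<open>auto intro: sets.sets_into_space simp: sets.sigma_sets_eq[of borel, simplified]\<close>)
  have "emeasure (delta_px n p y) UNIV = (\<Sum>i=1..n. ennreal (p i) * indicator UNIV (y i))"
    by (rule emeasure_delta) (use p0 U in auto)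
  also have "\<dots> = (\<Sum>i=1..n. ennreal (p i))" by simp
  also have "\<dots> = ennreal (\<Sum>i=1..n. p i)" by (rule sum_ennreal) (use p0 in auto)
  also have "\<dots> = 1" using p by (simp add: Pi_n_def)
  finally have "emeasure (delta_px n p y) (space (delta_px n p y)) = 1" using sp by simp
  then have "prob_space (delta_px n p y)" by (rule prob_spaceI)
  then show ?thesis
    unfolding real_distribution_def real_distribution_axioms_def using st by simp
qed

lemma interval_exists:
  assumes p: "p \<in> Pi_n n" and t: "0 < t" "t < 1" "t \<notin> Psum p ` {0..n}"
  shows "\<exists>i\<in>{1..n}. Psum p (i - 1) < t \<and> t < Psum p i"
proof -
  have ex: "t < Psum p n" using Psum_n[OF p] t by simp
  define i where "i = (LEAST i. t < Psum p i)"
  have ti: "t < Psum p i" unfolding i_def by (rule LeastI[of "\<lambda>i. t < Psum p i", OF ex])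
  have "i \<le> n" unfolding i_def by (rule Least_le[of "\<lambda>i. t < Psum p i", OF ex])
  moreover have "i \<noteq> 0" using ti t by (auto)
  moreover have "\<not> t < Psum p (i - 1)"
    unfolding i_def by (rule not_less_Least) (use \<open>i \<noteq> 0\<close> in \<open>simp add: i_def\<close>)
  moreover have "t \<noteq> Psum p (i - 1)" using t(3) \<open>i \<le> n\<close> by auto
  ultimately show ?thesis using ti by (intro bexI[of _ i]) auto
qed

lemma interval_unique:
  assumes p: "p \<in> Pi_n n" and i: "i \<in> {1..n}" and j: "j \<in> {1..n}"
    and ti: "Psum p (i - 1) < t" "t < Psum p i" and tj: "Psum p (j - 1) < t" "t < Psum p j"
  shows "i = j"
proof (rule ccontr)
  assume "i \<noteq> j"
  then consider "i < j" | "j < i" by linarith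
  then show False
  proof cases
    case 1
    then have "Psum p i \<le> Psum p (j - 1)" using j by (intro Psum_mono[OF p]) auto
    then show False using ti tj by simp
  next
    case 2
    then have "Psum p j \<le> Psum p (i - 1)" using i by (intro Psum_mono[OF p]) auto
    then show False using ti tj by simp
  qed
qed

context real_distribution
begin

lemma Q_diff_set_meas:
  assumes "real_distribution N"
  shows "set_borel_measurable lborel {0<..<1} (\<lambda>t. \<bar>quantile N t - quantile M t\<bar> powr r)"
proof -
  interpret N: real_distribution N by (rule assms)
  show ?thesis
    using q_meas_lborel N.q_meas_lborel unfolding set_borel_measurable_def
    by (subst borel_measurable_restrict_space_iff[symmetric]) auto
qed

lemma decomp:
  assumes mom: "integrable M (\<lambda>x. \<bar>x\<bar> powr r)" and r: "r > 0"
    and p: "p \<in> Pi_n n" and y: "y \<in> Xi_n n"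
  shows "(LINT t:{0<..<1}|lborel. \<bar>quantile (delta_px n p y) t - quantile M t\<bar> powr r)
       = (\<Sum>i=1..n. Lf r (quantile M) (Psum p (i - 1)) (Psum p i) (y i))"
proof -
  let ?I = "\<lambda>i. {Psum p (i - 1)<..<Psum p i}"
  let ?g = "\<lambda>i t. indicat_real (?I i) t *\<^sub>R \<bar>quantile M t - y i\<bar> powr r"
  have sub: "?I i \<subseteq> {0<..<1}" if "i \<in> {1..n}" for i
  proof -
    have "0 \<le> Psum p (i - 1)" by (rule Psum_nonneg[OF p]) (use that in auto)
    moreover have "Psum p i \<le> 1" by (rule Psum_le1[OF p]) (use that in auto)
    ultimately show ?thesis by auto
  qed
  have intg: "integrable lborel (?g i)" if "i \<in> {1..n}" for i
    using set_integrable_subset[OF Q_c_integrable[OF mom r, of "y i"] _ sub[OF that]]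
    by (simp add: set_integrable_def)
  have "(\<Sum>i=1..n. Lf r (quantile M) (Psum p (i - 1)) (Psum p i) (y i))
      = (\<Sum>i=1..n. integral\<^sup>L lborel (?g i))"
    unfolding Lf_def set_lebesgue_integral_def by (simp add: abs_minus_commute)
  also have "\<dots> = integral\<^sup>L lborel (\<lambda>t. \<Sum>i=1..n. ?g i t)"
    by (rule Bochner_Integration.integral_sum[symmetric]) (use intg in auto)
  also have "\<dots> = (LINT t:{0<..<1}|lborel. \<bar>quantile (delta_px n p y) t - quantile M t\<bar> powr r)"
    unfolding set_lebesgue_integral_def
  proof (rule integral_cong_AE)
    show "(\<lambda>t. \<Sum>i=1..n. ?g i t) \<in> borel_measurable lborel"
      using intg by (intro borel_measurable_sum) auto
    show "(\<lambda>t. indicat_real {0<..<1} t *\<^sub>R \<bar>quantile (delta_px n p y) t - quantile M t\<bar> powr r) \<in> borel_measurable lborel"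
      using Q_diff_set_meas[OF delta_real_distribution[OF p]] unfolding set_borel_measurable_def .
    have "AE t in lborel. t \<notin> Psum p ` {0..n}"
      by (intro AE_not_in countable_imp_null_set_lborel countable_finite) auto
    then show "AE t in lborel. (\<Sum>i=1..n. ?g i t) = indicat_real {0<..<1} t *\<^sub>R \<bar>quantile (delta_px n p y) t - quantile M t\<bar> powr r"
    proof eventually_elim
      case (elim t)
      show ?case
      proof (cases "t \<in> {0<..<1}")
        case False
        then have "\<And>i. i \<in> {1..n} \<Longrightarrow> t \<notin> ?I i" using sub by blast
        then have "(\<Sum>i=1..n. ?g i t) = 0" by (intro sum.neutral) simp
        moreover have "indicat_real {0<..<1} t = 0" using False by simp
        ultimately show ?thesis by simp
      next
        case True
        then obtain i where i: "i \<in> {1..n}" "Psum p (i - 1) < t" "t < Psum p i"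
          using interval_exists[OF p _ _ elim] by auto
        have "(\<Sum>j=1..n. ?g j t) = ?g i t + (\<Sum>j\<in>{1..n} - {i}. ?g j t)"
          by (rule sum.remove) (use i in auto)
        also have "(\<Sum>j\<in>{1..n} - {i}. ?g j t) = 0"
        proof (rule sum.neutral, rule ballI)
          fix j assume j: "j \<in> {1..n} - {i}"
          have "t \<notin> ?I j"
          proof
            assume "t \<in> ?I j"
            then have "i = j" using interval_unique[OF p i(1) _ i(2,3)] j by auto
            then show False using j by simp
          qed
          then show "?g j t = 0" by simp
        qed
        also have "?g i t = \<bar>quantile M t - y i\<bar> powr r" using i by simp
        also have "quantile (delta_px n p y) t = y i" by (rule quantile_delta[OF p y i])
        then have "\<bar>quantile M t - y i\<bar> powr r = indicat_real {0<..<1} t *\<^sub>R \<bar>quantile (delta_px n p y) t - quantile M t\<bar> powr r"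
          using True by (simp add: abs_minus_commute)
        finally show ?thesis by simp
      qed
    qed
  qed
  finally show ?thesis ..
qed

end


lemma powr_le_iff_base:
  fixes a b e :: real
  assumes "0 \<le> a" "0 \<le> b" "e > 0"
  shows "a powr e \<le> b powr e \<longleftrightarrow> a \<le> b"
proof
  assume h: "a powr e \<le> b powr e"
  show "a \<le> b"
  proof (rule ccontr)
    assume "\<not> a \<le> b"
    then have "b powr e < a powr e" using assms by (intro powr_less_mono2) auto
    then show False using h by simp
  qed
next
  assume "a \<le> b"
  then show "a powr e \<le> b powr e" using assms by (intro powr_mono2) auto
qed

lemma Lf_empty: "b \<le> a \<Longrightarrow> Lf r f a b c = 0"
  unfolding Lf_def by (simp add: set_lebesgue_integral_def)

lemma closed_open_int:
  fixes g :: "real \<Rightarrow> real"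
  assumes ab: "a < b" and meas: "set_borel_measurable lborel {a<..<b} g"
  shows "(LINT t:{a..b}|lborel. g t) = (LINT t:{a<..<b}|lborel. g t)"
proof -
  have eq: "(\<lambda>t. indicat_real {a..b} t *\<^sub>R g t)
      = (\<lambda>t. indicat_real {a<..<b} t *\<^sub>R g t + (indicat_real {a} t * g a + indicat_real {b} t * g b))"
    using ab by (auto simp: indicator_def fun_eq_iff)
  have m2: "set_borel_measurable lborel {a..b} g"
    unfolding set_borel_measurable_def eq
    using meas unfolding set_borel_measurable_def
    by (intro borel_measurable_add borel_measurable_times borel_measurable_indicator) auto
  have "AE x in lborel. x \<in> {a<..<b} \<longleftrightarrow> x \<in> {a..b}"
    using AE_lborel_singleton[of a] AE_lborel_singleton[of b]
    by eventually_elim auto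
  then show ?thesis by (rule set_integral_cong_set[OF meas m2])
qed

lemma sortfill:
  fixes c :: "nat \<Rightarrow> real"
  assumes S: "S \<subseteq> {1..n}" and mono: "\<And>i j. i \<in> S \<Longrightarrow> j \<in> S \<Longrightarrow> i \<le> j \<Longrightarrow> c i \<le> c j"
  shows "\<exists>x\<in>Xi_n n. \<forall>i\<in>S. x i = c i"
proof (cases "S = {}")
  case True
  then show ?thesis by (intro bexI[of _ "\<lambda>_. 0"]) (auto simp: Xi_n_def)
next
  case False
  have fin: "finite S" using S finite_subset by blast
  define c0 where "c0 = c (Min S)"
  define x where "x i = Max (insert c0 (c ` {j\<in>S. j \<le> i}))" for i
  have fin2: "finite (insert c0 (c ` {j\<in>S. j \<le> i}))" for i using fin by auto
  have "x \<in> Xi_n n"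
    unfolding Xi_n_def
  proof (intro CollectI allI impI)
    fix i assume "1 \<le> i \<and> i < n"
    show "x i \<le> x (Suc i)" unfolding x_def
      by (rule Max_mono) (use fin2 in auto)
  qed
  moreover have "\<forall>i\<in>S. x i = c i"
  proof
    fix i assume i: "i \<in> S"
    show "x i = c i" unfolding x_def
    proof (rule Max_eqI[OF fin2])
      fix y assume "y \<in> insert c0 (c ` {j \<in> S. j \<le> i})"
      then show "y \<le> c i"
      proof
        assume "y = c0"
        have "Min S \<in> S" "Min S \<le> i" using fin False i by auto
        then have "c (Min S) \<le> c i" using i by (intro mono) auto
        then show ?thesis using \<open>y = c0\<close> unfolding c0_def by simp
      next
        assume "y \<in> c ` {j \<in> S. j \<le> i}"
        then show ?thesis using i mono by auto
      qed
    qed (use i in auto)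
  qed
  ultimately show ?thesis by blast
qed

lemma comb:
  fixes L :: "nat \<Rightarrow> real \<Rightarrow> real" and Ok :: "nat \<Rightarrow> real \<Rightarrow> bool" and \<Phi> :: "(nat \<Rightarrow> real) \<Rightarrow> bool"
  assumes D: "\<And>x. \<Phi> x \<longleftrightarrow> x \<in> Xi_n n \<and> (\<forall>y\<in>Xi_n n. (\<Sum>i=1..n. L i (x i)) \<le> (\<Sum>i=1..n. L i (y i)))"
    and ok: "\<And>i c. i \<in> {1..n} \<Longrightarrow> Ok i c \<longleftrightarrow> (\<forall>c'. L i c \<le> L i c')"
    and xs: "xs \<in> Xi_n n" "\<And>i. i \<in> {1..n} \<Longrightarrow> Ok i (xs i)"
  shows "(\<exists>x. \<Phi> x) \<and> (\<forall>x\<in>Xi_n n. \<Phi> x \<longleftrightarrow> (\<forall>i\<in>{1..n}. Ok i (x i)))"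
proof -
  have suff: "\<Phi> x" if x: "x \<in> Xi_n n" "\<forall>i\<in>{1..n}. Ok i (x i)" for x
  proof -
    have "\<forall>y\<in>Xi_n n. (\<Sum>i=1..n. L i (x i)) \<le> (\<Sum>i=1..n. L i (y i))"
    proof
      fix y show "(\<Sum>i=1..n. L i (x i)) \<le> (\<Sum>i=1..n. L i (y i))"
        by (rule sum_mono) (use x ok in auto)
    qed
    then show ?thesis using D x by auto
  qed
  have nec: "Ok i (x i)" if x: "\<Phi> x" and i: "i \<in> {1..n}" for x i
  proof (rule ccontr)
    assume "\<not> Ok i (x i)"
    then have "\<not> (\<forall>c'. L i (x i) \<le> L i c')" using ok[OF i] by simp
    then obtain c' where c': "L i c' < L i (x i)" by (auto simp: not_le)
    have xsle: "\<And>j c. j \<in> {1..n} \<Longrightarrow> L j (xs j) \<le> L j c" using xs(2) ok by blast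
    have "(\<Sum>j=1..n. L j (xs j)) < (\<Sum>j=1..n. L j (x j))"
    proof (rule sum_strict_mono_ex1)
      show "\<forall>j\<in>{1..n}. L j (xs j) \<le> L j (x j)" using xsle by blast
      show "\<exists>j\<in>{1..n}. L j (xs j) < L j (x j)"
        using xsle[OF i, of c'] c' i by (intro bexI[of _ i]) auto
    qed simp
    moreover have "(\<Sum>j=1..n. L j (x j)) \<le> (\<Sum>j=1..n. L j (xs j))" using D x xs(1) by auto
    ultimately show False by simp
  qed
  show ?thesis using suff nec xs by blast
qed

lemma tau_char:
  assumes L: "Lsetup r f a b" and r: "r > 1"
  shows "c = tau_r r f {a..b} \<longleftrightarrow> (\<forall>c'. Lf r f a b c \<le> Lf r f a b c')"
proof -
  interpret Lsetup r f a b by (rule L)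
  have eqL: "Lr_dist_const r f {a..b} c = (Lf r f a b c) powr (1 / r)" for c
  proof -
    have "set_borel_measurable lborel {a<..<b} (\<lambda>t. \<bar>f t - c\<bar> powr r)"
      using int[of c] unfolding set_integrable_def set_borel_measurable_def by auto
    then show ?thesis unfolding Lr_dist_const_def Lf_def using closed_open_int[OF ab] by simp
  qed
  have iff: "(\<forall>c'. Lr_dist_const r f {a..b} c \<le> Lr_dist_const r f {a..b} c') \<longleftrightarrow> (\<forall>c'. Lf r f a b c \<le> Lf r f a b c')" for c
    unfolding eqL using powr_le_iff_base[OF L_nonneg L_nonneg, of "1 / r"] r by simp
  obtain c0 where c0: "\<forall>c'. Lf r f a b c0 \<le> Lf r f a b c'" using L_min_exists by blast
  have tau: "tau_r r f {a..b} = c0"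
    unfolding tau_r_def
  proof (rule the_equality)
    show "\<forall>c'. Lr_dist_const r f {a..b} c0 \<le> Lr_dist_const r f {a..b} c'" using iff c0 by blast
    fix c assume "\<forall>c'. Lr_dist_const r f {a..b} c \<le> Lr_dist_const r f {a..b} c'"
    then have "\<forall>c'. Lf r f a b c \<le> Lf r f a b c'" using iff by blast
    then show "c = c0" using L_unique[OF r _ c0] by blast
  qed
  show ?thesis
    unfolding tau using c0 L_unique[OF r _ c0] by blast
qed


theorem theorem5p4:
  fixes r :: real and M :: "real measure" and n :: nat and p :: "nat \<Rightarrow> real"
  assumes "r \<ge> 1" and "M \<in> prob_measures_r r" and "p \<in> Pi_n n"
  shows "(\<exists>x. is_minimizer r M n p x)
    \<and> (r = 1 \<longrightarrow> (\<forall>x\<in>Xi_n n. is_minimizer r M n p x \<longleftrightarrow>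
          (\<forall>i\<in>{1..n}. Psum p (i - 1) < Psum p i \<longrightarrow>
             x i \<in> Q_set M ((Psum p (i - 1) + Psum p i) / 2))))
    \<and> (r > 1 \<longrightarrow> (\<forall>x\<in>Xi_n n. is_minimizer r M n p x \<longleftrightarrow>
          (\<forall>i\<in>{1..n}. Psum p (i - 1) < Psum p i \<longrightarrow>
             x i = tau_r r (quantile M) {Psum p (i - 1) .. Psum p i})))"
proof -
  have r1: "1 \<le> r" by (rule assms(1))
  have r0: "r > 0" using r1 by simp
  have Mp: "M \<in> prob_measures" and mom: "integrable M (\<lambda>x. \<bar>x\<bar> powr r)"
    using assms(2) unfolding prob_measures_r_def by auto
  interpret real_distribution M by (rule prob_measures_rd[OF Mp])
  have p: "p \<in> Pi_n n" by (rule assms(3))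
  define L where "L i c = Lf r (quantile M) (Psum p (i - 1)) (Psum p i) c" for i c
  have Lnn: "0 \<le> L i c" for i c unfolding L_def Lf_def by (rule set_int_nonneg) simp
  have sn: "0 \<le> (\<Sum>i=1..n. L i (y i))" for y by (intro sum_nonneg Lnn)
  have dr: "d_r r (delta_px n p y) M = (\<Sum>i=1..n. L i (y i)) powr (1 / r)" if "y \<in> Xi_n n" for y
    unfolding d_r_def L_def using decomp[OF mom r0 p that] by simp
  have D: "is_minimizer r M n p x \<longleftrightarrow> x \<in> Xi_n n \<and> (\<forall>y\<in>Xi_n n. (\<Sum>i=1..n. L i (x i)) \<le> (\<Sum>i=1..n. L i (y i)))" for x
  proof
    assume "is_minimizer r M n p x"
    then have x: "x \<in> Xi_n n" and h: "\<And>y. y \<in> Xi_n n \<Longrightarrow> d_r r (delta_px n p x) M \<le> d_r r (delta_px n p y) M"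
      unfolding is_minimizer_def by auto
    show "x \<in> Xi_n n \<and> (\<forall>y\<in>Xi_n n. (\<Sum>i=1..n. L i (x i)) \<le> (\<Sum>i=1..n. L i (y i)))"
    proof (intro conjI ballI x)
      fix y assume y: "y \<in> Xi_n n"
      show "(\<Sum>i=1..n. L i (x i)) \<le> (\<Sum>i=1..n. L i (y i))"
        using h[OF y] dr[OF x] dr[OF y] powr_le_iff_base[OF sn[of x] sn[of y], of "1 / r"] r0 by simp
    qed
  next
    assume h: "x \<in> Xi_n n \<and> (\<forall>y\<in>Xi_n n. (\<Sum>i=1..n. L i (x i)) \<le> (\<Sum>i=1..n. L i (y i)))"
    then have x: "x \<in> Xi_n n" by simp
    show "is_minimizer r M n p x"
      unfolding is_minimizer_def
    proof (intro conjI ballI x)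
      fix y assume y: "y \<in> Xi_n n"
      show "d_r r (delta_px n p x) M \<le> d_r r (delta_px n p y) M"
        using h y dr[OF x] dr[OF y] powr_le_iff_base[OF sn[of x] sn[of y], of "1 / r"] r0 by simp
    qed
  qed
  have Ip: "0 \<le> Psum p (i - 1)" "Psum p i \<le> 1" if "i \<in> {1..n}" for i
  proof -
    show "0 \<le> Psum p (i - 1)" by (rule Psum_nonneg[OF p]) (use that in auto)
    show "Psum p i \<le> 1" by (rule Psum_le1[OF p]) (use that in auto)
  qed
  have Lset: "Lsetup r (quantile M) (Psum p (i - 1)) (Psum p i)"
    if i: "i \<in> {1..n}" and lt: "Psum p (i - 1) < Psum p i" for i
  proof
    show "Psum p (i - 1) < Psum p i" by (rule lt)
    show "1 \<le> r" by (rule r1)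
    fix c
    show "set_integrable lborel {Psum p (i - 1)<..<Psum p i} (\<lambda>t. \<bar>quantile M t - c\<bar> powr r)"
      by (rule set_integrable_subset[OF Q_c_integrable[OF mom r0]]) (use Ip[OF i] in auto)
  next
    show "mono_on {Psum p (i - 1)<..<Psum p i} (quantile M)"
      by (rule mono_on_subset[OF q_mono_on]) (use Ip[OF i] in auto)
  qed
  have Lempty: "L i c = 0" if "\<not> Psum p (i - 1) < Psum p i" for i c
    unfolding L_def by (rule Lf_empty) (use that in simp)
  define S where "S = {i\<in>{1..n}. Psum p (i - 1) < Psum p i}"
  have Smid: "Psum p i \<le> Psum p (j - 1)" if "i \<in> S" "j \<in> S" "i < j" for i j
    using that unfolding S_def by (intro Psum_mono[OF p]) auto
  show ?thesis
  proof (cases "r = 1")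
    case True
    define Ok where "Ok i c \<longleftrightarrow> (Psum p (i - 1) < Psum p i \<longrightarrow> c \<in> Q_set M ((Psum p (i - 1) + Psum p i) / 2))" for i c
    have ok: "Ok i c \<longleftrightarrow> (\<forall>c'. L i c \<le> L i c')" if i: "i \<in> {1..n}" for i c
    proof (cases "Psum p (i - 1) < Psum p i")
      case lt: True
      interpret Li: Lsetup r "quantile M" "Psum p (i - 1)" "Psum p i" by (rule Lset[OF i lt])
      have s: "0 < (Psum p (i - 1) + Psum p i) / 2" "(Psum p (i - 1) + Psum p i) / 2 < 1"
        using Ip[OF i] lt by auto
      have "(\<forall>c'. L i c \<le> L i c') \<longleftrightarrow>
         ((Psum p (i - 1) + Psum p i) / 2 \<le> Defs.cdf M c \<and> (\<forall>x<c. Defs.cdf M x \<le> (Psum p (i - 1) + Psum p i) / 2))"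
        unfolding L_def True
        by (rule L1_min_iff) (use Ip[OF i] lt Li.int True in auto)
      then show ?thesis unfolding Ok_def using Qchar[OF s] lt by simp
    next
      case False
      then show ?thesis unfolding Ok_def using Lempty[OF False] by simp
    qed
    define cc where "cc i = Inf {x. Defs.cdf M x \<ge> (Psum p (i - 1) + Psum p i) / 2}" for i
    have sS: "0 < (Psum p (i - 1) + Psum p i) / 2" "(Psum p (i - 1) + Psum p i) / 2 < 1" if "i \<in> S" for i
      using that Ip unfolding S_def by force+
    have mono: "cc i \<le> cc j" if "i \<in> S" "j \<in> S" "i \<le> j" for i j
    proof (cases "i = j")
      case False
      then have "Psum p i \<le> Psum p (j - 1)" using Smid that by simp
      then have "(Psum p (i - 1) + Psum p i) / 2 \<le> (Psum p (j - 1) + Psum p j) / 2"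
        using that unfolding S_def by auto
      then show ?thesis unfolding cc_def by (intro Qinf_mono) (use sS that in auto)
    qed simp
    have Ssub: "S \<subseteq> {1..n}" unfolding S_def by auto
    have "\<exists>x\<in>Xi_n n. \<forall>i\<in>S. x i = cc i"
    proof (rule sortfill[OF Ssub])
      fix i j assume "i \<in> S" "j \<in> S" "i \<le> j"
      then show "cc i \<le> cc j" by (rule mono)
    qed
    then obtain xs where xs: "xs \<in> Xi_n n" "\<And>i. i \<in> S \<Longrightarrow> xs i = cc i"
      by blast
    have okxs: "Ok i (xs i)" if "i \<in> {1..n}" for i
    proof (cases "i \<in> S")
      case True
      show ?thesis unfolding Ok_def xs(2)[OF True] cc_def
        using Qchar[OF sS[OF True]] Qinf_mem[OF sS[OF True]] by auto
    qed (use that in \<open>auto simp: Ok_def S_def\<close>)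
    have res: "(\<exists>x. is_minimizer r M n p x) \<and> (\<forall>x\<in>Xi_n n. is_minimizer r M n p x \<longleftrightarrow> (\<forall>i\<in>{1..n}. Ok i (x i)))"
      by (rule comb[where L = L]) (use D ok xs(1) okxs in auto)
    show ?thesis using res True unfolding Ok_def by auto
  next
    case False
    then have r: "r > 1" using r1 by simp
    define Ok where "Ok i c \<longleftrightarrow> (Psum p (i - 1) < Psum p i \<longrightarrow> c = tau_r r (quantile M) {Psum p (i - 1) .. Psum p i})" for i c
    have ok: "Ok i c \<longleftrightarrow> (\<forall>c'. L i c \<le> L i c')" if i: "i \<in> {1..n}" for i c
    proof (cases "Psum p (i - 1) < Psum p i")
      case lt: True
      show ?thesis unfolding Ok_def L_def using tau_char[OF Lset[OF i lt] r] lt by simp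
    next
      case False
      then show ?thesis unfolding Ok_def using Lempty[OF False] by simp
    qed
    define cc where "cc i = tau_r r (quantile M) {Psum p (i - 1) .. Psum p i}" for i
    have ccmin: "\<forall>c'. L i (cc i) \<le> L i c'" if "i \<in> S" for i
      using ok[of i "cc i"] that unfolding Ok_def cc_def S_def by auto
    have mono: "cc i \<le> cc j" if ij: "i \<in> S" "j \<in> S" "i \<le> j" for i j
    proof (cases "i = j")
      case False
      then have mid: "Psum p i \<le> Psum p (j - 1)" using Smid ij by simp
      have iS: "i \<in> {1..n}" "Psum p (i - 1) < Psum p i" and jS: "j \<in> {1..n}" "Psum p (j - 1) < Psum p j"
        using ij unfolding S_def by auto
      have v01: "0 < Psum p i" "Psum p i < 1" using Ip[OF iS(1)] Ip[OF jS(1)] iS jS mid by auto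
      let ?v = "quantile M (Psum p i)"
      have "cc i \<le> ?v"
      proof (rule Lsetup.L_clip_le[OF Lset[OF iS] r])
        show "\<forall>c'. Lf r (quantile M) (Psum p (i - 1)) (Psum p i) (cc i) \<le> Lf r (quantile M) (Psum p (i - 1)) (Psum p i) c'"
          using ccmin[OF ij(1)] unfolding L_def .
        fix t assume "t \<in> {Psum p (i - 1)<..<Psum p i}"
        then show "quantile M t \<le> ?v" using Ip[OF iS(1)] v01 by (intro q_mono) auto
      qed
      also have "?v \<le> cc j"
      proof (rule Lsetup.L_clip_ge[OF Lset[OF jS] r])
        show "\<forall>c'. Lf r (quantile M) (Psum p (j - 1)) (Psum p j) (cc j) \<le> Lf r (quantile M) (Psum p (j - 1)) (Psum p j) c'"
          using ccmin[OF ij(2)] unfolding L_def .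
        fix t assume "t \<in> {Psum p (j - 1)<..<Psum p j}"
        then show "?v \<le> quantile M t" using Ip[OF jS(1)] v01 mid by (intro q_mono) auto
      qed
      finally show ?thesis .
    qed simp
    have Ssub: "S \<subseteq> {1..n}" unfolding S_def by auto
    have "\<exists>x\<in>Xi_n n. \<forall>i\<in>S. x i = cc i"
    proof (rule sortfill[OF Ssub])
      fix i j assume "i \<in> S" "j \<in> S" "i \<le> j"
      then show "cc i \<le> cc j" by (rule mono)
    qed
    then obtain xs where xs: "xs \<in> Xi_n n" "\<And>i. i \<in> S \<Longrightarrow> xs i = cc i"
      by blast
    have okxs: "Ok i (xs i)" if "i \<in> {1..n}" for i
      using that xs(2) unfolding Ok_def S_def cc_def by auto
    have res: "(\<exists>x. is_minimizer r M n p x) \<and> (\<forall>x\<in>Xi_n n. is_minimizer r M n p x \<longleftrightarrow> (\<forall>i\<in>{1..n}. Ok i (x i)))"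
      by (rule comb[where L = L]) (use D ok xs(1) okxs in auto)
    show ?thesis using res r unfolding Ok_def by auto
  qed
qed


end
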